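(* Let $\mathbf w=\mathbf v_1a\mathbf v_2a\mathbf v_3$ where $a$ is a letter and $\mathbf v_1,\mathbf v_2,\mathbf v_3$ are possibly empty words. Suppose that $a$ occurs in $\mathbf v_1$ and that every letter occurring in $\mathbf v_2$ occurs at least twice in $\mathbf w$. Then the variety $\mathbf O$ satisfies the identity $\mathbf w\approx\mathbf v_1\mathbf v_2a\mathbf v_3$.
   Context: Words are elements of the free monoid over a countably infinite alphabet. $\mathbf O$ is the monoid variety defined by the identities $x^2y^2\approx y^2x^2$ and $xzxyxty\approx xzyxty$. *)

theory Defs
  imports Main
begin

text \<open>Words over a countably infinite alphabet: lists of naturals.
  A word is interpreted in a monoid via an assignment of letters to elements.\<close>

definition word_eval :: "(nat \<Rightarrow> 'm::monoid_mult) \<Rightarrow> nat list \<Rightarrow> 'm" where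
  "word_eval \<sigma> w = prod_list (map \<sigma> w)"

definition ident_holds :: "'m::monoid_mult itself \<Rightarrow> nat list \<Rightarrow> nat list \<Rightarrow> bool" where
  "ident_holds _ u v \<longleftrightarrow> (\<forall>\<sigma>::nat \<Rightarrow> 'm. word_eval \<sigma> u = word_eval \<sigma> v)"

text \<open>Membership in the variety O: letters x=0, y=1, z=2, t=3;
  identities x^2y^2 = y^2x^2 and xzxyxty = xzyxty.\<close>
definition in_O :: "'m::monoid_mult itself \<Rightarrow> bool" where
  "in_O T \<longleftrightarrow> ident_holds T [0,0,1,1] [1,1,0,0]
             \<and> ident_holds T [0,2,0,1,0,3,1] [0,2,1,0,3,1]"

end

theory Submission
  imports Defs
begin

lemma O_A:
  assumes "in_O TYPE('m::monoid_mult)"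
  shows "(x::'m) * (x * (y * y)) = y * (y * (x * x))"
proof -
  have "ident_holds TYPE('m) [0,0,1,1] [1,1,0,0]" using assms by (simp add: in_O_def)
  then have "word_eval (\<lambda>n. if n = 0 then x else y) [0,0,1,1] = word_eval (\<lambda>n. if n = 0 then x else y) [1,1,0,0]"
    unfolding ident_holds_def by blast
  then show ?thesis by (simp add: word_eval_def)
qed

lemma O_B:
  assumes "in_O TYPE('m::monoid_mult)"
  shows "(x::'m) * (z * (x * (y * (x * (t * y))))) = x * (z * (y * (x * (t * y))))"
proof -
  let ?s = "\<lambda>n::nat. if n = 0 then x else if n = 1 then y else if n = 2 then z else t"
  have "ident_holds TYPE('m) [0,2,0,1,0,3,1] [0,2,1,0,3,1]" using assms by (simp add: in_O_def)
  then have "word_eval ?s [0,2,0,1,0,3,1] = word_eval ?s [0,2,1,0,3,1]"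
    unfolding ident_holds_def by blast
  then show ?thesis by (simp add: word_eval_def)
qed

lemma O_C:
  assumes "in_O TYPE('m::monoid_mult)"
  shows "(x::'m) * (z * (x * x)) = x * (z * x)"
  using O_B[OF assms, of x z 1 1] by simp

lemma we_app: "word_eval s (u @ v) = word_eval s u * word_eval s v"
  by (simp add: word_eval_def)

lemma we_cons: "word_eval s (x # v) = s x * word_eval s v"
  by (simp add: word_eval_def)

lemma we_nil: "word_eval s [] = 1"
  by (simp add: word_eval_def)

lemma dbl:
  assumes O: "in_O TYPE('m::monoid_mult)" and "x \<in> set u"
  shows "word_eval (s::nat \<Rightarrow> 'm) u * s x = word_eval s u * (s x * s x)"
proof -
  obtain p q where u: "u = p @ x # q" using assms(2) by (meson split_list)
  have "word_eval s u * s x = word_eval s p * (s x * (word_eval s q * s x))"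
    by (simp add: u we_app we_cons mult.assoc)
  also have "\<dots> = word_eval s p * (s x * (word_eval s q * (s x * s x)))"
    using O_C[OF O, of "s x" "word_eval s q"] by simp
  also have "\<dots> = word_eval s u * (s x * s x)"
    by (simp add: u we_app we_cons mult.assoc)
  finally show ?thesis .
qed

lemma swap:
  assumes O: "in_O TYPE('m::monoid_mult)" and "x \<in> set u" and "y \<in> set u"
  shows "word_eval (s::nat \<Rightarrow> 'm) (u @ x # y # v) = word_eval s (u @ y # x # v)"
proof -
  have g: "word_eval s u * (s x * s y) = word_eval s u * (s y * s x)"
  proof -
    have "word_eval s u * (s x * s y) = (word_eval s u * s x) * s y" by (simp add: mult.assoc)
    also have "\<dots> = word_eval s (u @ [x,x]) * s y"
      using dbl[OF O assms(2), of s] by (simp add: we_app we_cons we_nil mult.assoc)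
    also have "\<dots> = word_eval s (u @ [x,x]) * (s y * s y)"
      using dbl[OF O, of y "u @ [x,x]" s] assms(3) by simp
    also have "\<dots> = word_eval s u * (s x * (s x * (s y * s y)))"
      by (simp add: we_app we_cons we_nil mult.assoc)
    also have "\<dots> = word_eval s u * (s y * (s y * (s x * s x)))"
      using O_A[OF O, of "s x" "s y"] by simp
    also have "\<dots> = (word_eval s u * (s y * s y)) * s x * s x"
      by (simp add: mult.assoc)
    also have "\<dots> = (word_eval s u * s y) * s x * s x"
      using dbl[OF O assms(3), of s] by simp
    also have "\<dots> = word_eval s (u @ [y]) * s x * s x"
      by (simp add: we_app we_cons we_nil mult.assoc)
    also have "\<dots> = word_eval s (u @ [y]) * s x"
      using dbl[OF O, of x "u @ [y]" s] assms(2) by (metis mult.assoc Un_iff set_append)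
    also have "\<dots> = word_eval s u * (s y * s x)"
      by (simp add: we_app we_cons we_nil mult.assoc)
    finally show ?thesis .
  qed
  have "word_eval s (u @ x # y # v) = (word_eval s u * (s x * s y)) * word_eval s v"
    by (simp add: we_app we_cons mult.assoc)
  also have "\<dots> = (word_eval s u * (s y * s x)) * word_eval s v" using g by simp
  also have "\<dots> = word_eval s (u @ y # x # v)"
    by (simp add: we_app we_cons mult.assoc)
  finally show ?thesis .
qed

lemma Bw:
  assumes O: "in_O TYPE('m::monoid_mult)"
  shows "word_eval (s::nat \<Rightarrow> 'm) (p @ a # z @ a # c # a # r @ c # w)
       = word_eval s (p @ a # z @ c # a # r @ c # w)"
proof -
  have "word_eval s (p @ a # z @ a # c # a # r @ c # w)
     = word_eval s p * (s a * (word_eval s z * (s a * (s c * (s a * (word_eval s r * s c)))))) * word_eval s w"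
    by (simp add: we_app we_cons mult.assoc)
  also have "\<dots> = word_eval s p * (s a * (word_eval s z * (s c * (s a * (word_eval s r * s c))))) * word_eval s w"
    using O_B[OF O, of "s a" "word_eval s z" "s c" "word_eval s r"] by simp
  also have "\<dots> = word_eval s (p @ a # z @ c # a # r @ c # w)"
    by (simp add: we_app we_cons mult.assoc)
  finally show ?thesis .
qed

lemma main:
  assumes O: "in_O TYPE('m::monoid_mult)" and a: "a \<in> set v1"
  shows "(\<forall>b \<in> set v2. count_list (v1 @ a # v2 @ a # v3) b \<ge> 2) \<Longrightarrow>
    word_eval (s::nat \<Rightarrow> 'm) (v1 @ a # v2 @ a # v3) = word_eval s (v1 @ v2 @ a # v3)"
proof (induction v2 arbitrary: v3 rule: rev_induct)
  case Nil
  have "word_eval s (v1 @ a # [] @ a # v3) = (word_eval s v1 * (s a * s a)) * word_eval s v3"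
    by (simp add: we_app we_cons mult.assoc)
  also have "\<dots> = (word_eval s v1 * s a) * word_eval s v3"
    using dbl[OF O a, of s] by simp
  also have "\<dots> = word_eval s (v1 @ [] @ a # v3)"
    by (simp add: we_app we_cons mult.assoc)
  finally show ?case .
next
  case (snoc c u)
  show ?case
  proof (cases "c \<in> set (v1 @ a # u)")
    case True
    have sw: "word_eval s (v1 @ a # u @ c # a # v3) = word_eval s (v1 @ a # u @ a # c # v3)"
    proof (cases "c = a")
      case True then show ?thesis by simp
    next
      case False
      with \<open>c \<in> set (v1 @ a # u)\<close> have "c \<in> set (v1 @ a # u)" by simp
      then show ?thesis using swap[OF O, where x=c and u="v1 @ a # u" and y=a and v=v3 and s=s] by simp
    qed
    have sw2: "word_eval s (v1 @ u @ a # c # v3) = word_eval s (v1 @ u @ c # a # v3)"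
    proof (cases "c = a")
      case True then show ?thesis by simp
    next
      case False
      with True have "c \<in> set (v1 @ u)" by auto
      then show ?thesis using swap[OF O, where x=a and u="v1 @ u" and y=c and v=v3 and s=s] a by simp
    qed
    have IH: "word_eval s (v1 @ a # u @ a # c # v3) = word_eval s (v1 @ u @ a # c # v3)"
      apply (rule snoc.IH)
      using snoc.prems by auto
    show ?thesis using sw IH sw2 by simp
  next
    case False
    have "count_list (v1 @ a # (u @ [c]) @ a # v3) c \<ge> 2" using snoc.prems by simp
    with False have "c \<in> set v3" using count_list_0_iff[of v3 c] by (auto split: if_splits)
    then obtain r w where v3: "v3 = r @ c # w" by (meson split_list)
    obtain p q where v1: "v1 = p @ a # q" using a by (meson split_list)
    have e1: "word_eval s (v1 @ a # (u @ [c]) @ a # v3) = word_eval s (v1 @ a # u @ a # c # a # v3)"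
      using Bw[OF O, of s p a "q @ a # u" c r w] by (simp add: v1 v3)
    have IH: "word_eval s (v1 @ a # u @ a # (c # a # v3)) = word_eval s (v1 @ u @ a # (c # a # v3))"
      apply (rule snoc.IH)
      using snoc.prems by auto
    have e2: "word_eval s (v1 @ u @ a # c # a # v3) = word_eval s (v1 @ (u @ [c]) @ a # v3)"
      using Bw[OF O, of s p a "q @ u" c r w] by (simp add: v1 v3)
    show ?thesis using e1 IH e2 by simp
  qed
qed

theorem lemma3p3:
  fixes v1 v2 v3 :: "nat list" and a :: nat
  assumes "a \<in> set v1"
    and "\<forall>b \<in> set v2. count_list (v1 @ a # v2 @ a # v3) b \<ge> 2"
    and "in_O TYPE('m::monoid_mult)"
  shows "ident_holds TYPE('m) (v1 @ a # v2 @ a # v3) (v1 @ v2 @ a # v3)"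
  unfolding ident_holds_def
  using main[OF assms(3) assms(1) assms(2)] by blast

end
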